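(* Every (finite or infinite) half graph $\Gamma$ with $|V(\Gamma)|\geq 4$ is prime.
   Context: A bipartite graph $\Gamma$ with bipartition $\{X,Y\}$ is a half graph if there exist a linear order $L$ on $X$ and a bijection $\varphi:X\to Y$ with $E(\Gamma)=\{\{x,\varphi(x')\}: x\leq x'\bmod L\}$. A module of a graph is a set $M$ of vertices such that every vertex outside $M$ is adjacent to all or none of $M$; $\emptyset$, $V(\Gamma)$ and singletons are trivial; $\Gamma$ is prime if $|V(\Gamma)|\geq3$ and all modules are trivial. *)

theory Defs
  imports Main
begin

definition adj :: "'a set set \<Rightarrow> 'a \<Rightarrow> 'a \<Rightarrow> bool" where
  "adj E u v \<longleftrightarrow> {u, v} \<in> E"

definition half_graph :: "'a set \<Rightarrow> 'a set set \<Rightarrow> bool" where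
  "half_graph V E \<longleftrightarrow>
     (\<exists>X Y L \<phi>. X \<inter> Y = {} \<and> V = X \<union> Y \<and>
        linear_order_on X L \<and> bij_betw \<phi> X Y \<and>
        E = {{x, \<phi> x'} | x x'. x \<in> X \<and> x' \<in> X \<and> (x, x') \<in> L})"

definition is_module :: "'a set \<Rightarrow> 'a set set \<Rightarrow> 'a set \<Rightarrow> bool" where
  "is_module V E M \<longleftrightarrow> M \<subseteq> V \<and>
     (\<forall>v \<in> V - M. (\<forall>m \<in> M. adj E v m) \<or> (\<forall>m \<in> M. \<not> adj E v m))"

definition trivial_module :: "'a set \<Rightarrow> 'a set \<Rightarrow> bool" where
  "trivial_module V M \<longleftrightarrow> M = {} \<or> M = V \<or> (\<exists>x. M = {x})"

definition card_ge :: "'a set \<Rightarrow> nat \<Rightarrow> bool" where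
  "card_ge V n \<longleftrightarrow> infinite V \<or> n \<le> card V"

definition prime_graph :: "'a set \<Rightarrow> 'a set set \<Rightarrow> bool" where
  "prime_graph V E \<longleftrightarrow> card_ge V 3 \<and> (\<forall>M. is_module V E M \<longrightarrow> trivial_module V M)"

end

theory Submission
  imports Defs
begin

lemma hg_adj_sym: "adj E u v = adj E v u"
  unfolding adj_def by (simp add: insert_commute)

lemma hg_adjXY:
  assumes "X \<inter> \<phi> ` X = {}" "inj_on \<phi> X"
    "E = {{x, \<phi> x'} | x x'. x \<in> X \<and> x' \<in> X \<and> (x, x') \<in> L}"
    "x \<in> X" "x' \<in> X"
  shows "adj E x (\<phi> x') \<longleftrightarrow> (x, x') \<in> L"
proof
  assume "adj E x (\<phi> x')"
  then obtain u u' where u: "{x, \<phi> x'} = {u, \<phi> u'}" "u \<in> X" "u' \<in> X" "(u, u') \<in> L"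
    using assms(3) unfolding adj_def by blast
  from u(1) have "(x = u \<and> \<phi> x' = \<phi> u') \<or> (x = \<phi> u' \<and> \<phi> x' = u)"
    by (simp add: doubleton_eq_iff)
  moreover have "x \<noteq> \<phi> u'" using assms(1,4) u(3) by blast
  ultimately have "x = u" "\<phi> x' = \<phi> u'" by auto
  then have "x' = u'" using assms(2,5) u(3) inj_on_eq_iff by metis
  then show "(x, x') \<in> L" using u \<open>x = u\<close> by simp
next
  assume "(x, x') \<in> L"
  then show "adj E x (\<phi> x')" using assms unfolding adj_def by blast
qed

lemma hg_adjXX:
  assumes "X \<inter> \<phi> ` X = {}"
    "E = {{x, \<phi> x'} | x x'. x \<in> X \<and> x' \<in> X \<and> (x, x') \<in> L}"
    "x \<in> X" "z \<in> X"
  shows "\<not> adj E x z"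
proof
  assume "adj E x z"
  then obtain u u' where u: "{x, z} = {u, \<phi> u'}" "u \<in> X" "u' \<in> X"
    using assms(2) unfolding adj_def by blast
  then have "\<phi> u' = x \<or> \<phi> u' = z" by (metis insertI1 insertE insert_commute singletonD)
  then show False using assms u by blast
qed

lemma hg_adjYY:
  assumes "X \<inter> \<phi> ` X = {}"
    "E = {{x, \<phi> x'} | x x'. x \<in> X \<and> x' \<in> X \<and> (x, x') \<in> L}"
    "x \<in> X" "z \<in> X"
  shows "\<not> adj E (\<phi> x) (\<phi> z)"
proof
  assume "adj E (\<phi> x) (\<phi> z)"
  then obtain u u' where u: "{\<phi> x, \<phi> z} = {u, \<phi> u'}" "u \<in> X" "u' \<in> X"
    using assms(2) unfolding adj_def by blast
  then have "u = \<phi> x \<or> u = \<phi> z" by (metis insertI1 insertE insert_commute singletonD)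
  then show False using assms u by blast
qed

theorem corollary5p4:
  fixes V :: "'a set" and E :: "'a set set"
  assumes "half_graph V E" and "card_ge V 4"
  shows "prime_graph V E"
proof -
  obtain X Y L \<phi> where H: "X \<inter> Y = {}" "V = X \<union> Y" "linear_order_on X L" "bij_betw \<phi> X Y"
    and Edef: "E = {{x, \<phi> x'} | x x'. x \<in> X \<and> x' \<in> X \<and> (x, x') \<in> L}"
    using assms(1) unfolding half_graph_def by blast
  have Y: "Y = \<phi> ` X" and inj: "inj_on \<phi> X" using H(4) by (auto simp: bij_betw_def)
  have disj: "X \<inter> \<phi> ` X = {}" using H(1) Y by simp
  have refl: "\<And>x. x \<in> X \<Longrightarrow> (x, x) \<in> L" and
    tot: "\<And>x y. x \<in> X \<Longrightarrow> y \<in> X \<Longrightarrow> x \<noteq> y \<Longrightarrow> (x, y) \<in> L \<or> (y, x) \<in> L" and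
    anti: "\<And>x y. (x, y) \<in> L \<Longrightarrow> (y, x) \<in> L \<Longrightarrow> x = y"
    using H(3) unfolding linear_order_on_def partial_order_on_def preorder_on_def refl_on_def
      total_on_def antisym_def by blast+
  note XY = hg_adjXY[OF disj inj Edef]
  note XX = hg_adjXX[OF disj Edef]
  note YY = hg_adjYY[OF disj Edef]
  have c3: "card_ge V 3" using assms(2) unfolding card_ge_def by auto
  have main: "M = V" if mod: "is_module V E M" and pq: "p \<in> M" "q \<in> M" "p \<noteq> q" for M p q
  proof -
    have MV: "M \<subseteq> V" and mc: "\<And>v m m'. v \<in> V \<Longrightarrow> v \<notin> M \<Longrightarrow> m \<in> M \<Longrightarrow> m' \<in> M \<Longrightarrow>
        adj E v m \<Longrightarrow> adj E v m'"
      using mod unfolding is_module_def by blast+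
    have C1: "c \<in> M" if "a \<in> X" "a \<in> M" "b \<in> X" "\<phi> b \<in> M" "c \<in> X" "(c, b) \<in> L" for a b c
    proof (rule ccontr)
      assume "c \<notin> M"
      moreover have "adj E c (\<phi> b)" using XY that by blast
      ultimately have "adj E c a" using mc[of c "\<phi> b" a] that H(2) by blast
      then show False using XX that by blast
    qed
    have C2: "\<phi> c \<in> M" if "a \<in> X" "a \<in> M" "b \<in> X" "\<phi> b \<in> M" "c \<in> X" "(a, c) \<in> L" for a b c
    proof (rule ccontr)
      assume "\<phi> c \<notin> M"
      moreover have "adj E (\<phi> c) a" using XY that hg_adj_sym by metis
      moreover have "\<phi> c \<in> V" using H(2) Y that by blast
      ultimately have "adj E (\<phi> c) (\<phi> b)" using mc[of "\<phi> c" a "\<phi> b"] that by blast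
      then show False using YY that by blast
    qed
    have C3: "\<phi> a \<in> M" if "a \<in> X" "a \<in> M" "b \<in> X" "b \<in> M" "a \<noteq> b" "(a, b) \<in> L" for a b
    proof (rule ccontr)
      assume "\<phi> a \<notin> M"
      moreover have "adj E (\<phi> a) a" using XY that refl hg_adj_sym by metis
      moreover have "\<phi> a \<in> V" using H(2) Y that by blast
      ultimately have "adj E (\<phi> a) b" using mc[of "\<phi> a" a b] that by blast
      then have "(b, a) \<in> L" using XY that hg_adj_sym by metis
      then show False using anti that by blast
    qed
    have C4: "b \<in> M" if "a \<in> X" "\<phi> a \<in> M" "b \<in> X" "\<phi> b \<in> M" "a \<noteq> b" "(a, b) \<in> L" for a b
    proof (rule ccontr)
      assume "b \<notin> M"
      moreover have "adj E b (\<phi> b)" using XY that refl by metis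
      moreover have "b \<in> V" using H(2) that by blast
      ultimately have "adj E b (\<phi> a)" using mc[of b "\<phi> b" "\<phi> a"] that by blast
      then have "(b, a) \<in> L" using XY that by metis
      then show False using anti that by blast
    qed
    have "\<exists>x y. x \<in> X \<and> y \<in> X \<and> x \<in> M \<and> \<phi> y \<in> M"
    proof -
      have pV: "p \<in> X \<or> p \<in> \<phi> ` X" and qV: "q \<in> X \<or> q \<in> \<phi> ` X"
        using pq MV H(2) Y by blast+
      show ?thesis
      proof (cases "p \<in> X \<and> q \<in> X")
        case True
        then have "(p, q) \<in> L \<or> (q, p) \<in> L" using tot pq by blast
        then show ?thesis using C3 True pq by metis
      next
        case F: False
        show ?thesis
        proof (cases "p \<in> \<phi> ` X \<and> q \<in> \<phi> ` X")
          case True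
          then obtain a b where ab: "a \<in> X" "b \<in> X" "p = \<phi> a" "q = \<phi> b" by blast
          then have "a \<noteq> b" using pq by blast
          then have "(a, b) \<in> L \<or> (b, a) \<in> L" using tot ab by blast
          then show ?thesis using C4 ab pq \<open>a \<noteq> b\<close> by metis
        next
          case False
          then show ?thesis using F pV qV pq by blast
        qed
      qed
    qed
    then obtain x0 y0 where xy0: "x0 \<in> X" "y0 \<in> X" "x0 \<in> M" "\<phi> y0 \<in> M" by blast
    have "\<exists>x y. x \<in> X \<and> y \<in> X \<and> x \<in> M \<and> \<phi> y \<in> M \<and> (x, y) \<in> L"
    proof (cases "(x0, y0) \<in> L")
      case True
      then show ?thesis using xy0 by blast
    next
      case False
      then have "x0 \<noteq> y0" using refl xy0 by blast
      then have L: "(y0, x0) \<in> L" using tot xy0 False by blast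
      have "y0 \<in> M" using C1[of x0 y0 y0] xy0 refl by blast
      moreover have "\<phi> x0 \<in> M" using C2[of x0 y0 x0] xy0 refl by blast
      ultimately show ?thesis using L xy0 by blast
    qed
    then obtain x y where xy: "x \<in> X" "y \<in> X" "x \<in> M" "\<phi> y \<in> M" "(x, y) \<in> L" by blast
    have all: "d \<in> M \<and> \<phi> d \<in> M" if d: "d \<in> X" for d
    proof (cases "(d, y) \<in> L")
      case True
      then have dM: "d \<in> M" using C1[of x y d] xy d by blast
      then have "\<phi> d \<in> M" using C2[of d y d] xy d refl by blast
      then show ?thesis using dM by blast
    next
      case False
      then have "(y, d) \<in> L" using tot d xy refl by blast
      moreover have "trans L" using H(3)
        unfolding linear_order_on_def partial_order_on_def preorder_on_def by blast
      ultimately have "(x, d) \<in> L" using xy by (meson transD)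
      then have pd: "\<phi> d \<in> M" using C2[of x y d] xy d by blast
      then have "d \<in> M" using C1[of x d d] xy d refl by blast
      then show ?thesis using pd by blast
    qed
    show "M = V" using MV all H(2) Y by blast
  qed
  show ?thesis
    unfolding prime_graph_def
  proof (intro conjI allI impI c3)
    fix M assume m: "is_module V E M"
    show "trivial_module V M"
    proof (cases "\<exists>p q. p \<in> M \<and> q \<in> M \<and> p \<noteq> q")
      case True
      then show ?thesis using main m unfolding trivial_module_def by blast
    next
      case False
      then have "M = {} \<or> (\<exists>x. M = {x})" by blast
      then show ?thesis unfolding trivial_module_def by blast
    qed
  qed
qed

end
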